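(* Let $R$ be a nonzero $m\times m$ rational matrix function with no poles on $\mathbb{T}$ given by $R(z)=zC(I_n-zA)^{-1}\Gamma+R_0+\Gamma^*(zI_n-A^* )^{-1}C^*$ with $A$ stable $n\times n$, and assume $R(\zeta)\ge0$ for all $\zeta\in\mathbb{T}$. Let $\Phi\in\mathfrak{R}H^\infty_{r\times m}$ be an outer spectral factor of $R$, $\mathcal{X}_\Phi=\{x\in\mathbb{C}^n:W_{obs}x\in\operatorname{Im}T_\Phi^*\}$, and $C_\Phi$ an $r\times n$ matrix with $\Phi(z)=\Phi(0)+zC_\Phi(I_n-zA)^{-1}\Gamma$ and $W_{obs}x=T_\Phi^*W_{\Phi,obs}x$ for $x\in\mathcal{X}_\Phi$. Then the space \[ \mathcal{M}_\Phi=\{f\in\ell^2_+(\mathbb{C}^r): T_\Phi^*f\in\operatorname{Im}W_{obs}\} \] is given by $\mathcal{M}_\Phi=W_{\Phi,obs}\mathcal{X}_\Phi$. If, in addition, the pair $\{C,A\}$ is observable, then $\mathcal{M}_\Phi=\operatorname{Im}W_{\circ,obs}$, where $W_{\circ,obs}$ is the observability operator of the pair $\{C_\circ,A_\circ\}$ with $A_\circ=P_{\mathcal{X}_\Phi}A|_{\mathcal{X}_\Phi}$ and $C_\circ=C_\Phi|_{\mathcal{X}_\Phi}$.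
   Context: $\mathbb{T}$ is the unit circle; a stable matrix has all eigenvalues in the open unit disc. $\mathfrak{R}H^\infty_{k\times l}$: $k\times l$ rational matrix functions without poles in the closed unit disc. $\ell^2_+(\mathbb{C}^k)$: square summable $\mathbb{C}^k$-valued sequences indexed by $j\ge0$; $T_\Omega$: block Toeplitz operator with $(i,j)$ block $\Omega_{i-j}$. $W_{obs}=\operatorname{col}(CA^j)_{j\ge0}$, $W_{\Phi,obs}=\operatorname{col}(C_\Phi A^j)_{j\ge0}$. An outer spectral factor of $R$ is $\Phi\in\mathfrak{R}H^\infty_{r\times m}$ with $R(z)=\Phi(1/\bar z)^*\Phi(z)$ and $T_\Phi$ of dense range. Observable means the observability operator is injective. $P_{\mathcal{X}_\Phi}$ is the orthogonal projection onto $\mathcal{X}_\Phi$. (Such a $C_\Phi$ always exists.) *)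

theory Defs
  imports "HOL-Analysis.Analysis" "HOL-Computational_Algebra.Polynomial"
begin

(* Finite dimensions are type variables: C^n = complex^'n, an m x n matrix is complex^'n^'m. *)

definition mat_adj :: "complex^'n^'m \<Rightarrow> complex^'m^'n" where
  "mat_adj M = (\<chi> i j. cnj (M $ j $ i))"

(* Hermitian inner product on C^k *)
definition cinner :: "complex^'k \<Rightarrow> complex^'k \<Rightarrow> complex" where
  "cinner x y = (\<Sum>i\<in>UNIV. x $ i * cnj (y $ i))"

(* stable: all eigenvalues in the open unit disc *)
definition stable :: "complex^'n^'n \<Rightarrow> bool" where
  "stable A \<longleftrightarrow> (\<forall>c x. x \<noteq> 0 \<and> A *v x = c *s x \<longrightarrow> cmod c < 1)"

(* positive semidefinite matrix *)
definition psd :: "complex^'m^'m \<Rightarrow> bool" where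
  "psd M \<longleftrightarrow> mat_adj M = M \<and> (\<forall>x. 0 \<le> Re (cinner (M *v x) x))"

definition msc :: "complex \<Rightarrow> complex^'n^'m \<Rightarrow> complex^'n^'m" where
  "msc z M = (\<chi> i j. z * M $ i $ j)"

(* R(z) = z C (I - zA)^{-1} Gamma + R0 + adj(Gamma) (zI - adj A)^{-1} adj C *)
definition Rfun :: "complex^'n^'m \<Rightarrow> complex^'n^'n \<Rightarrow> complex^'m^'n \<Rightarrow> complex^'m^'m
    \<Rightarrow> complex \<Rightarrow> complex^'m^'m" where
  "Rfun C A \<Gamma> R0 z =
     msc z (C ** matrix_inv (mat 1 - msc z A) ** \<Gamma>) + R0
      + mat_adj \<Gamma> ** matrix_inv (msc z (mat 1) - mat_adj A) ** mat_adj C"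

(* the points where the realization formula of R is defined *)
definition Rdom :: "complex^'n^'n \<Rightarrow> complex \<Rightarrow> bool" where
  "Rdom A z \<longleftrightarrow> det (mat 1 - msc z A) \<noteq> 0 \<and> det (msc z (mat 1) - mat_adj A) \<noteq> 0"

(* Phi \<in> RH^\<infinity>_{r x m}: rational matrix function (each entry a quotient of polynomials)
   without poles in the closed unit disc *)
definition RH_inf :: "(complex \<Rightarrow> complex^'m^'r) \<Rightarrow> bool" where
  "RH_inf \<Phi> \<longleftrightarrow> (\<forall>i j. \<exists>p q. (\<forall>z. cmod z \<le> 1 \<longrightarrow> poly q z \<noteq> 0) \<and>
                              (\<forall>z. \<Phi> z $ i $ j = poly p z / poly q z))"

(* Taylor coefficients at 0 *)
definition taylor_coeff :: "(complex \<Rightarrow> complex^'m^'r) \<Rightarrow> nat \<Rightarrow> complex^'m^'r" where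
  "taylor_coeff \<Phi> k = (\<chi> i j. (deriv ^^ k) (\<lambda>z. \<Phi> z $ i $ j) 0 / of_nat (fact k))"

(* l^2_+(C^k) *)
definition l2 :: "(nat \<Rightarrow> complex^'k) set" where
  "l2 = {f. summable (\<lambda>j. (norm (f j))\<^sup>2)}"

definition l2inner :: "(nat \<Rightarrow> complex^'k) \<Rightarrow> (nat \<Rightarrow> complex^'k) \<Rightarrow> complex" where
  "l2inner f g = (\<Sum>j. cinner (f j) (g j))"

definition l2norm :: "(nat \<Rightarrow> complex^'k) \<Rightarrow> real" where
  "l2norm f = sqrt (\<Sum>j. (norm (f j))\<^sup>2)"

(* block Toeplitz operator T_Omega, (i,j) block Omega_{i-j} (zero for i<j) *)
definition toeplitz :: "(nat \<Rightarrow> complex^'m^'r) \<Rightarrow> (nat \<Rightarrow> complex^'m) \<Rightarrow> (nat \<Rightarrow> complex^'r)" where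
  "toeplitz \<Omega> f = (\<lambda>i. \<Sum>j\<le>i. \<Omega> (i - j) *v f j)"

(* Hilbert space adjoint of an operator l^2_+(C^m) -> l^2_+(C^r) *)
definition l2_adjoint :: "((nat \<Rightarrow> complex^'m) \<Rightarrow> (nat \<Rightarrow> complex^'r))
     \<Rightarrow> (nat \<Rightarrow> complex^'r) \<Rightarrow> (nat \<Rightarrow> complex^'m)" where
  "l2_adjoint T g = (THE h. h \<in> l2 \<and> (\<forall>f\<in>l2. l2inner (T f) g = l2inner f h))"

definition dense_range_l2 :: "((nat \<Rightarrow> complex^'m) \<Rightarrow> (nat \<Rightarrow> complex^'r)) \<Rightarrow> bool" where
  "dense_range_l2 T \<longleftrightarrow> (\<forall>g\<in>l2. \<forall>e>0. \<exists>f\<in>l2. l2norm (\<lambda>j. T f j - g j) < e)"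

(* outer spectral factor of R *)
definition outer_spectral_factor ::
  "(complex \<Rightarrow> complex^'m^'m) \<Rightarrow> (complex \<Rightarrow> bool) \<Rightarrow> (complex \<Rightarrow> complex^'m^'r) \<Rightarrow> bool" where
  "outer_spectral_factor R Rdef \<Phi> \<longleftrightarrow> RH_inf \<Phi> \<and>
     (\<forall>z. z \<noteq> 0 \<and> Rdef z \<and> (\<forall>i j. (\<lambda>w. \<Phi> w $ i $ j) analytic_on {z, 1 / cnj z})
          \<longrightarrow> R z = mat_adj (\<Phi> (1 / cnj z)) ** \<Phi> z) \<and>
     dense_range_l2 (toeplitz (taylor_coeff \<Phi>))"

(* observability operator of a pair {C, F}, F a linear map: x |-> (C F^j x)_{j>=0} *)
definition obs :: "complex^'n^'m \<Rightarrow> (complex^'n \<Rightarrow> complex^'n) \<Rightarrow> complex^'n \<Rightarrow> (nat \<Rightarrow> complex^'m)" where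
  "obs C F x = (\<lambda>j. C *v ((F ^^ j) x))"

(* orthogonal projection onto a subspace X of C^n *)
definition orth_proj :: "(complex^'n) set \<Rightarrow> complex^'n \<Rightarrow> complex^'n" where
  "orth_proj X x = (THE y. y \<in> X \<and> (\<forall>z\<in>X. cinner (x - y) z = 0))"

end

theory Submission
  imports Defs "HOL-Complex_Analysis.Complex_Analysis"
begin

unbundle no fps_syntax

lemma ball_enlarge:
  fixes U :: "complex set"
  assumes "open U" "cball 0 1 \<subseteq> U"
  shows "\<exists>\<rho>>1. ball 0 \<rho> \<subseteq> U"
proof -
  obtain d where d: "d > 0" "\<forall>x\<in>cball 0 1. \<forall>y\<in>-U. d \<le> dist x y"
    using separate_compact_closed[of "cball (0::complex) 1" "-U"] assms by auto
  have "ball 0 (1 + d) \<subseteq> U"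
  proof
    fix z :: complex assume z: "z \<in> ball 0 (1+d)"
    show "z \<in> U"
    proof (cases "norm z \<le> 1")
      case True then show ?thesis using assms by auto
    next
      case False
      define w where "w = z / of_real (norm z)"
      have nz: "norm z > 0" using False by auto
      have w1: "w \<in> cball 0 1" using nz by (simp add: w_def norm_divide)
      have "z - w = of_real (1 - 1 / norm z) * z" using nz by (simp add: w_def field_simps)
      hence "dist w z = norm (of_real (1 - 1 / norm z) * z)"
        by (metis dist_norm dist_commute)
      also have "\<dots> = \<bar>1 - 1/norm z\<bar> * norm z"
        by (simp only: norm_mult norm_of_real)
      also have "\<bar>1 - 1/norm z\<bar> = 1 - 1/norm z" using False by (simp add: divide_le_eq)
      also have "(1 - 1/norm z) * norm z = norm z - 1" using nz by (simp add: field_simps)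
      also have "\<dots> < d" using z by simp
      finally show ?thesis using d w1 by force
    qed
  qed
  thus ?thesis using d by (intro exI[of _ "1+d"]) auto
qed

lemma taylor_summable:
  fixes f :: "complex \<Rightarrow> complex"
  assumes "f holomorphic_on ball 0 \<rho>" "\<rho> > 1"
  shows "summable (\<lambda>n. norm ((deriv ^^ n) f 0 / fact n))"
proof -
  have "fps_conv_radius (fps_expansion f 0) \<ge> ereal \<rho>"
    using assms by (intro conv_radius_fps_expansion) auto
  hence "ereal (norm (1::complex)) < fps_conv_radius (fps_expansion f 0)"
  proof -
    have "ereal 1 < ereal \<rho>" using assms(2) by simp
    thus ?thesis using \<open>fps_conv_radius (fps_expansion f 0) \<ge> ereal \<rho>\<close>
      by (metis less_le_trans norm_one)
  qed
  from abs_summable_in_conv_radius[OF this[unfolded fps_conv_radius_def]]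
  show ?thesis by (simp add: fps_expansion_def)
qed

lemma sq_summable:
  assumes "summable (\<lambda>n. norm (a n :: 'a::real_normed_vector))"
  shows "summable (\<lambda>n. (norm (a n))^2)"
proof -
  have "(\<lambda>n. norm (a n)) \<longlonglongrightarrow> 0" using summable_LIMSEQ_zero[OF assms] .
  hence ev: "eventually (\<lambda>n. norm (a n) < 1) sequentially"
    by (rule order_tendstoD) simp
  show ?thesis
  proof (rule summable_comparison_test_ev[OF _ assms])
    show "eventually (\<lambda>n. norm ((norm (a n))^2) \<le> norm (a n)) sequentially"
      using ev
    proof eventually_elim
      case (elim n)
      have "(norm (a n))^2 \<le> norm (a n) * 1"
        unfolding power2_eq_square by (rule mult_left_mono) (use elim in auto)
      thus ?case by simp
    qed
  qed
qed

lemma RH_inf_taylor_summable: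
  assumes "RH_inf \<Phi>"
  shows "summable (\<lambda>k. norm (taylor_coeff \<Phi> k $ i $ j))"
proof -
  obtain p q where pq: "\<forall>z. cmod z \<le> 1 \<longrightarrow> poly q z \<noteq> 0" "\<forall>z. \<Phi> z $ i $ j = poly p z / poly q z"
    using assms unfolding RH_inf_def by blast
  have "open {z. poly q z \<noteq> 0}"
    by (rule open_Collect_neq) (auto intro: continuous_intros)
  moreover have "cball 0 1 \<subseteq> {z. poly q z \<noteq> 0}" using pq by auto
  ultimately obtain \<rho> where rho: "\<rho> > 1" "ball 0 \<rho> \<subseteq> {z. poly q z \<noteq> 0}"
    using ball_enlarge by blast
  have eq: "(\<lambda>z. \<Phi> z $ i $ j) = (\<lambda>z. poly p z / poly q z)" using pq by auto
  have "(\<lambda>z. poly p z / poly q z) holomorphic_on ball 0 \<rho>"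
    using rho by (intro holomorphic_intros) auto
  hence "summable (\<lambda>n. norm ((deriv ^^ n) (\<lambda>z. \<Phi> z $ i $ j) 0 / fact n))"
    using rho unfolding eq by (intro taylor_summable) auto
  thus ?thesis by (simp add: taylor_coeff_def)
qed

definition mnorm :: "'a::real_normed_vector^'n^'m \<Rightarrow> real" where
  "mnorm M = (\<Sum>i\<in>UNIV. \<Sum>j\<in>UNIV. norm (M $ i $ j))"

lemma mnorm_nonneg: "mnorm M \<ge> 0"
  unfolding mnorm_def by (intro sum_nonneg) auto

lemma norm_le_l1_gen: "norm (x :: 'a::real_normed_vector^'n) \<le> (\<Sum>i\<in>UNIV. norm (x $ i))"
  unfolding norm_vec_def by (rule L2_set_le_sum) auto

lemma norm_mv: "norm ((M :: complex^'n^'m) *v v) \<le> mnorm M * norm v"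
proof -
  have "norm (M *v v) \<le> (\<Sum>i\<in>UNIV. norm ((M *v v) $ i))" by (rule norm_le_l1_gen)
  also have "\<dots> \<le> (\<Sum>i\<in>UNIV. \<Sum>j\<in>UNIV. norm (M $ i $ j) * norm v)"
  proof (rule sum_mono)
    fix i
    have "norm ((M *v v) $ i) = norm (\<Sum>j\<in>UNIV. M $ i $ j * v $ j)"
      by (simp add: matrix_vector_mult_def)
    also have "\<dots> \<le> (\<Sum>j\<in>UNIV. norm (M $ i $ j * v $ j))" by (rule norm_sum)
    also have "\<dots> \<le> (\<Sum>j\<in>UNIV. norm (M $ i $ j) * norm v)"
      unfolding norm_mult by (intro sum_mono mult_left_mono) (auto simp: Finite_Cartesian_Product.norm_nth_le)
    finally show "norm ((M *v v) $ i) \<le> (\<Sum>j\<in>UNIV. norm (M $ i $ j) * norm v)" .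
  qed
  also have "\<dots> = mnorm M * norm v"
    by (simp add: mnorm_def sum_distrib_right)
  finally show ?thesis .
qed

lemma det_holo:
  fixes F :: "complex \<Rightarrow> complex^'n^'n"
  assumes "\<And>i j. (\<lambda>z. F z $ i $ j) holomorphic_on S"
  shows "(\<lambda>z. det (F z :: complex^'n^'n)) holomorphic_on S"
  unfolding det_def by (intro holomorphic_intros assms)

lemma norm_sq_vec: "(norm (x :: complex^'n))^2 = (\<Sum>k\<in>UNIV. (norm (x $ k))^2)"
  unfolding norm_vec_def L2_set_def by (simp add: sum_nonneg)

lemma msc_mv: "msc z A *v v = z *s (A *v (v::complex^'n))"
  by (simp add: vec_eq_iff matrix_vector_mult_def msc_def sum_distrib_left mult.assoc)

lemma mat_msc_mv: "(mat 1 - msc z A) *v v = v - z *s (A *v (v::complex^'n))"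
  by (simp add: matrix_vector_mult_diff_rdistrib msc_mv)

lemma mat_msc_entry: "(mat 1 - msc z A) $ i $ j = (if i = j then 1 else 0) - z * (A::complex^'n^'n) $ i $ j"
  by (simp add: msc_def mat_def)

lemma det_nz:
  fixes A :: "complex^'n^'n"
  assumes "stable A" "cmod z \<le> 1"
  shows "det (mat 1 - msc z A) \<noteq> 0"
proof
  assume "det (mat 1 - msc z A) = 0"
  hence "\<not> (\<exists>B. B ** (mat 1 - msc z A) = mat 1)"
    using invertible_det_nz invertible_left_inverse by blast
  then obtain x where x: "(mat 1 - msc z A) *v x = 0" "x \<noteq> 0"
    using matrix_left_invertible_ker by blast
  hence xe: "x = z *s (A *v x)" by (simp add: mat_msc_mv)
  have z0: "z \<noteq> 0" using xe x(2) by auto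
  have "(1/z) *s x = A *v x" using z0
    by (subst xe) (simp add: vector_smult_assoc)
  hence "cmod (1/z) < 1" using assms(1) x(2) unfolding stable_def by metis
  hence "1 < cmod z" using z0 by (simp add: norm_divide divide_less_eq)
  thus False using assms(2) by simp
qed

lemma stable_l2:
  fixes A :: "complex^'n^'n"
  assumes "stable A"
  shows "summable (\<lambda>n. (norm (((\<lambda>v. A *v v) ^^ n) x))^2)"
proof -
  define c where "c n = ((\<lambda>v. A *v v) ^^ n) x" for n
  define K where "K = mnorm A"
  have K0: "K \<ge> 0" unfolding K_def by (rule mnorm_nonneg)
  have cS: "c (Suc n) = A *v c n" for n by (simp add: c_def)
  have c0: "c 0 = x" by (simp add: c_def)
  have cb: "norm (c n) \<le> K^n * norm x" for n
  proof (induction n)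
    case 0 then show ?case by (simp add: c0)
  next
    case (Suc n)
    have "norm (c (Suc n)) \<le> K * norm (c n)" unfolding cS K_def by (rule norm_mv)
    also have "\<dots> \<le> K * (K^n * norm x)" using Suc K0 by (rule mult_left_mono)
    finally show ?case by (simp add: mult.assoc)
  qed
  have cbk: "norm (c n $ k) \<le> K^n * norm x" for n k
    using Finite_Cartesian_Product.norm_nth_le cb order_trans by blast
  define d where "d z = det (mat 1 - msc z A)" for z
  have dholo: "d holomorphic_on UNIV"
    unfolding d_def by (rule det_holo) (simp only: mat_msc_entry, intro holomorphic_intros)
  have "open {z. d z \<noteq> 0}"
    by (rule open_Collect_neq) (auto intro: holomorphic_on_imp_continuous_on dholo)
  moreover have "cball 0 1 \<subseteq> {z. d z \<noteq> 0}" using det_nz[OF assms] by (auto simp: d_def)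
  ultimately obtain \<rho> where rho: "\<rho> > 1" "ball 0 \<rho> \<subseteq> {z. d z \<noteq> 0}"
    using ball_enlarge by blast
  define G where "G k z = det (\<chi> i j. if j = k then x$i else (mat 1 - msc z A)$i$j) / d z" for k z
  have Gholo: "G k holomorphic_on ball 0 \<rho>" for k
    unfolding G_def
  proof (intro holomorphic_intros)
    show "(\<lambda>z. det (\<chi> i j. if j = k then x$i else (mat 1 - msc z A)$i$j)) holomorphic_on ball 0 \<rho>"
    proof (rule det_holo)
      fix i j
      show "(\<lambda>z. (\<chi> i j. if j = k then x$i else (mat 1 - msc z A)$i$j) $ i $ j) holomorphic_on ball 0 \<rho>"
        by (cases "j = k") (simp_all add: mat_msc_entry msc_def, (intro holomorphic_intros)+)
    qed
    show "d holomorphic_on ball 0 \<rho>" using dholo by (rule holomorphic_on_subset) auto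
  qed (use rho in auto)
  define \<delta> where "\<delta> = 1 / (K + 1)"
  have d0: "\<delta> > 0" "\<delta> \<le> 1" using K0 by (auto simp: \<delta>_def field_simps)
  have small: "norm z * K < 1" if "norm z < \<delta>" for z :: complex
  proof -
    have "norm z * K \<le> \<delta> * K" using that K0 by (intro mult_right_mono) auto
    also have "\<dots> < 1" using K0 by (simp add: \<delta>_def field_simps)
    finally show ?thesis .
  qed
  have summ: "summable (\<lambda>n. norm (z^n * c n $ j))" if "norm z < \<delta>" for z j
  proof (rule summable_comparison_test)
    show "\<exists>N. \<forall>n\<ge>N. norm (norm (z ^ n * c n $ j)) \<le> norm x * (norm z * K)^n"
    proof (intro exI allI impI)
      fix n
      have "norm (norm (z ^ n * c n $ j)) = norm z ^ n * norm (c n $ j)"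
        by (simp add: norm_mult norm_power)
      also have "\<dots> \<le> norm z ^ n * (K^n * norm x)" by (intro mult_left_mono cbk) auto
      also have "\<dots> = norm x * (norm z * K)^n" by (simp add: power_mult_distrib)
      finally show "norm (norm (z ^ n * c n $ j)) \<le> norm x * (norm z * K)^n" .
    qed
    show "summable (\<lambda>n. norm x * (norm z * K)^n)"
      using small[OF that] K0 by (intro summable_mult summable_geometric) auto
  qed
  have expand: "G k z = (\<Sum>n. z^n * c n $ k)" if z: "norm z < \<delta>" for z k
  proof -
    define s where "s = (\<chi> j. \<Sum>n. z^n * c n $ j)"
    have sj: "summable (\<lambda>n. z^n * c n $ j)" for j
      using summ[OF z] by (rule summable_norm_cancel)
    have "(mat 1 - msc z A) *v s = x"
    proof (subst vec_eq_iff, intro allI)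
      fix i
      have "(A *v s) $ i = (\<Sum>j\<in>UNIV. A$i$j * (\<Sum>n. z^n * c n $ j))"
        by (simp add: matrix_vector_mult_def s_def)
      also have "\<dots> = (\<Sum>j\<in>UNIV. \<Sum>n. A$i$j * (z^n * c n $ j))"
        using sj by (simp add: suminf_mult)
      also have "\<dots> = (\<Sum>n. \<Sum>j\<in>UNIV. A$i$j * (z^n * c n $ j))"
        using sj by (intro suminf_sum[symmetric] summable_mult)
      also have "\<dots> = (\<Sum>n. z^n * c (Suc n) $ i)"
        by (simp add: cS matrix_vector_mult_def sum_distrib_left algebra_simps)
      finally have As: "(A *v s) $ i = (\<Sum>n. z^n * c (Suc n) $ i)" .
      have eqf: "(\<lambda>n. \<Sum>j\<in>UNIV. A$i$j * (z^n * c n $ j)) = (\<lambda>n. z^n * c (Suc n) $ i)"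
        by (simp add: cS matrix_vector_mult_def sum_distrib_left algebra_simps)
      have "summable (\<lambda>n. \<Sum>j\<in>UNIV. A$i$j * (z^n * c n $ j))"
        using sj by (intro summable_sum summable_mult)
      hence sS: "summable (\<lambda>n. z^n * c (Suc n) $ i)" unfolding eqf .
      have "z * (A *v s) $ i = (\<Sum>n. z * (z^n * c (Suc n) $ i))"
        unfolding As using sS by (intro suminf_mult[symmetric])
      also have "\<dots> = (\<Sum>n. z^Suc n * c (Suc n) $ i)" by (simp add: mult.assoc)
      also have "\<dots> = s $ i - x $ i"
        using suminf_split_head[OF sj[of i]] by (simp add: s_def c0)
      finally have "z * (A *v s) $ i = s $ i - x $ i" .
      thus "((mat 1 - msc z A) *v s) $ i = x $ i" by (simp add: mat_msc_mv)
    qed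
    moreover have "d z \<noteq> 0" using det_nz[OF assms, of z] z d0 by (simp add: d_def)
    ultimately have "s = (\<chi> k. det(\<chi> i j. if j=k then x$i else (mat 1 - msc z A)$i$j) / det (mat 1 - msc z A))"
      using cramer[of "mat 1 - msc z A" s x] by (simp add: d_def)
    hence "s $ k = G k z" by (simp add: G_def d_def)
    thus ?thesis by (simp add: s_def)
  qed
  have sumk: "summable (\<lambda>n. norm (c n $ k))" for k
  proof -
    define F where "F = Abs_fps (\<lambda>n. c n $ k)"
    have Fn: "fps_nth F n = c n $ k" for n by (simp add: F_def)
    define h where "h = complex_of_real (\<delta>/2)"
    have nh: "norm h = \<delta>/2" using d0 by (simp add: h_def)
    have "norm h < \<delta>" using d0 nh by simp
    from summ[OF this, of k] have "summable (\<lambda>n. h^n * c n $ k)"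
      by (rule summable_norm_cancel)
    hence "summable (\<lambda>n. fps_nth F n * h ^ n)"
      unfolding Fn by (subst mult.commute)
    hence "fps_conv_radius F \<ge> norm h"
      unfolding fps_conv_radius_def by (rule conv_radius_geI)
    moreover have "ereal 0 < ereal (norm h)" unfolding ereal_less nh using d0 by simp
    ultimately have r0: "fps_conv_radius F > 0"
      using zero_ereal_def less_le_trans by metis
    have "eventually (\<lambda>z. z \<in> ball 0 \<delta>) (nhds (0::complex))"
      using d0 by (intro eventually_nhds_in_open) auto
    hence "eventually (\<lambda>z. eval_fps F z = G k z) (nhds 0)"
    proof eventually_elim
      case (elim z)
      hence "G k z = (\<Sum>n. z^n * c n $ k)" using expand[of z k] by simp
      also have "\<dots> = eval_fps F z" unfolding eval_fps_def Fn by (subst mult.commute) (rule refl)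
      finally show ?case by simp
    qed
    with r0 have "G k has_fps_expansion F" by (simp add: has_fps_expansion_def)
    hence "fps_conv_radius F \<ge> ereal \<rho>"
      using Gholo[of k] by (intro holomorphic_on_imp_fps_conv_radius_ge) auto
    moreover have "ereal (norm (1::complex)) < ereal \<rho>" using rho by simp
    ultimately have "ereal (norm (1::complex)) < fps_conv_radius F" using less_le_trans by metis
    from abs_summable_in_conv_radius[OF this[unfolded fps_conv_radius_def]]
    show ?thesis by (simp add: Fn)
  qed
  have "summable (\<lambda>n. \<Sum>k\<in>UNIV. (norm (c n $ k))^2)"
    by (intro summable_sum sq_summable sumk)
  thus ?thesis by (simp add: norm_sq_vec c_def)
qed

section \<open>Hermitian inner product\<close>

lemma cinner_norm: "norm (cinner (x::complex^'k) y) \<le> norm x * norm y"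
proof -
  have "norm (cinner x y) \<le> (\<Sum>i\<in>UNIV. norm (x$i * cnj (y$i)))"
    unfolding cinner_def by (rule norm_sum)
  also have "\<dots> = (\<Sum>i\<in>UNIV. \<bar>norm (x$i)\<bar> * \<bar>norm (y$i)\<bar>)" by (simp add: norm_mult)
  also have "\<dots> \<le> L2_set (\<lambda>i. norm (x$i)) UNIV * L2_set (\<lambda>i. norm (y$i)) UNIV"
    by (rule L2_set_mult_ineq)
  finally show ?thesis by (simp add: norm_vec_def)
qed

lemma cinner_norm2: "norm (cinner (x::complex^'k) y) \<le> ((norm x)^2 + (norm y)^2) / 2"
proof -
  have "norm x * norm y \<le> ((norm x)^2 + (norm y)^2) / 2"
    using sum_squares_bound[of "norm x" "norm y"] by (simp add: field_simps)
  thus ?thesis using cinner_norm[of x y] by linarith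
qed

lemma cinner_self: "cinner (x::complex^'k) x = of_real ((norm x)^2)"
  unfolding cinner_def norm_sq_vec of_real_sum by (rule sum.cong[OF refl]) (rule complex_norm_square[symmetric])

lemma cinner_diff_left: "cinner ((x::complex^'k) - y) z = cinner x z - cinner y z"
  unfolding cinner_def by (simp add: algebra_simps sum_subtractf)

lemma cinner_diff_right: "cinner (x::complex^'k) (y - z) = cinner x y - cinner x z"
  unfolding cinner_def by (simp add: algebra_simps sum_subtractf)

lemma cinner_zero_right[simp]: "cinner (x::complex^'k) 0 = 0"
  unfolding cinner_def by simp

lemma cinner_sum_left: "cinner (\<Sum>j\<in>J. (v j::complex^'k)) y = (\<Sum>j\<in>J. cinner (v j) y)"
proof -
  have "cinner (\<Sum>j\<in>J. v j) y = (\<Sum>i\<in>UNIV. \<Sum>j\<in>J. v j $ i * cnj (y$i))"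
    by (simp add: cinner_def sum_component sum_distrib_right)
  also have "\<dots> = (\<Sum>j\<in>J. \<Sum>i\<in>UNIV. v j $ i * cnj (y$i))" by (rule sum.swap)
  finally show ?thesis by (simp add: cinner_def)
qed

lemma cinner_adj: "cinner ((M::complex^'n^'m) *v x) y = cinner x (mat_adj M *v y)"
proof -
  have L: "cinner (M *v x) y = (\<Sum>i\<in>UNIV. \<Sum>j\<in>UNIV. M$i$j * x$j * cnj (y$i))"
    by (simp add: cinner_def matrix_vector_mult_def sum_distrib_right)
  have R: "cinner x (mat_adj M *v y) = (\<Sum>j\<in>UNIV. \<Sum>i\<in>UNIV. M$i$j * x$j * cnj (y$i))"
    by (simp add: cinner_def matrix_vector_mult_def mat_adj_def sum_distrib_left algebra_simps)
  show ?thesis unfolding L R by (rule sum.swap)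
qed

lemma mnorm_adj: "mnorm (mat_adj (M::complex^'n^'m)) = mnorm M"
proof -
  have "mnorm (mat_adj M) = (\<Sum>i\<in>UNIV. \<Sum>j\<in>UNIV. norm (M $ j $ i))"
    by (simp add: mnorm_def mat_adj_def)
  also have "\<dots> = mnorm M" unfolding mnorm_def by (rule sum.swap)
  finally show ?thesis .
qed

lemma cinner_suminf_right:
  assumes "summable (v :: nat \<Rightarrow> complex^'k)"
  shows "cinner x (suminf v) = (\<Sum>n. cinner x (v n))"
proof -
  have s1: "summable (\<lambda>n. v n $ i)" for i
    using bounded_linear.summable[OF bounded_linear_vec_nth assms] .
  have c1: "(suminf v) $ i = (\<Sum>n. v n $ i)" for i
    using bounded_linear.suminf[OF bounded_linear_vec_nth assms] by simp
  have c2: "cnj (\<Sum>n. v n $ i) = (\<Sum>n. cnj (v n $ i))" for i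
    using sums_cnj[THEN iffD2, OF summable_sums[OF s1[of i]]] by (simp add: sums_iff)
  have s2: "summable (\<lambda>n. cnj (v n $ i))" for i
    using sums_cnj[THEN iffD2, OF summable_sums[OF s1[of i]]] by (simp add: sums_iff)
  have "cinner x (suminf v) = (\<Sum>i\<in>UNIV. x$i * (\<Sum>n. cnj (v n $ i)))"
    unfolding cinner_def c1 c2 ..
  also have "\<dots> = (\<Sum>i\<in>UNIV. \<Sum>n. x$i * cnj (v n $ i))"
    using s2 by (simp add: suminf_mult)
  also have "\<dots> = (\<Sum>n. \<Sum>i\<in>UNIV. x$i * cnj (v n $ i))"
    using s2 by (intro suminf_sum[symmetric] summable_mult)
  finally show ?thesis unfolding cinner_def .
qed

section \<open>l2\<close>

lemma l2_iff: "f \<in> l2 \<longleftrightarrow> summable (\<lambda>j. (norm (f j))^2)" by (simp add: l2_def)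

lemma l2_bounded:
  assumes "(f :: nat \<Rightarrow> complex^'k) \<in> l2"
  obtains B where "\<And>n. norm (f n) \<le> B" "B \<ge> 0"
proof -
  have "(\<lambda>n. (norm (f n))^2) \<longlonglongrightarrow> 0"
    using assms by (intro summable_LIMSEQ_zero) (simp add: l2_def)
  hence "Bseq (\<lambda>n. (norm (f n))^2)" by (rule convergent_imp_Bseq[OF convergentI])
  then obtain K where K: "K > 0" "\<And>n. norm ((norm (f n))^2) \<le> K" by (auto simp: Bseq_def)
  have "norm (f n) \<le> max 1 K" for n
  proof (cases "norm (f n) \<le> 1")
    case False
    hence "norm (f n) \<le> norm (f n) * norm (f n)" by (simp add: mult_le_cancel_left1)
    also have "\<dots> \<le> K" using K(2)[of n] by (simp add: power2_eq_square)
    finally show ?thesis by simp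
  qed simp
  thus ?thesis using that[of "max 1 K"] by simp
qed

lemma l2_diff:
  assumes "(f :: nat \<Rightarrow> complex^'k) \<in> l2" "g \<in> l2"
  shows "(\<lambda>j. f j - g j) \<in> l2"
proof -
  have b: "norm ((norm (f j - g j))^2) \<le> 2 * (norm (f j))^2 + 2 * (norm (g j))^2" for j
  proof -
    have "norm (f j - g j) \<le> norm (f j) + norm (g j)" by (rule norm_triangle_ineq4)
    hence "(norm (f j - g j))^2 \<le> (norm (f j) + norm (g j))^2" by (rule power_mono) simp
    moreover have "2 * norm (f j) * norm (g j) \<le> (norm (f j))^2 + (norm (g j))^2"
      by (rule sum_squares_bound)
    ultimately show ?thesis unfolding power2_sum by simp
  qed
  have s: "summable (\<lambda>j. 2 * (norm (f j))^2 + 2 * (norm (g j))^2)"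
    using assms by (intro summable_add summable_mult) (auto simp: l2_def)
  have "summable (\<lambda>j. (norm (f j - g j))^2)"
    by (rule summable_comparison_test[OF _ s]) (use b in blast)
  thus ?thesis by (simp add: l2_def)
qed

lemma l2_shift:
  assumes "(f :: nat \<Rightarrow> complex^'k) \<in> l2"
  shows "(\<lambda>j. f (j + k)) \<in> l2"
  using assms summable_iff_shift[where f="\<lambda>j. (norm (f j))^2" and k=k] unfolding l2_def by simp

lemma l2inner_summable:
  assumes "(f :: nat \<Rightarrow> complex^'k) \<in> l2" "g \<in> l2"
  shows "summable (\<lambda>j. norm (cinner (f j) (g j)))"
proof (rule summable_comparison_test[of _ "\<lambda>j. ((norm (f j))^2 + (norm (g j))^2) / 2"])
  show "\<exists>N. \<forall>n\<ge>N. norm (norm (cinner (f n) (g n))) \<le> ((norm (f n))^2 + (norm (g n))^2) / 2"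
    using cinner_norm2 by auto
  show "summable (\<lambda>j. ((norm (f j))^2 + (norm (g j))^2) / 2)"
    using assms by (intro summable_divide summable_add) (auto simp: l2_def)
qed

lemma l2inner_diff_left:
  assumes "(f :: nat \<Rightarrow> complex^'k) \<in> l2" "g \<in> l2" "h \<in> l2"
  shows "l2inner (\<lambda>j. f j - g j) h = l2inner f h - l2inner g h"
  unfolding l2inner_def cinner_diff_left
  by (rule suminf_diff[symmetric]; rule summable_norm_cancel; rule l2inner_summable; fact)

lemma l2inner_diff_right:
  assumes "(f :: nat \<Rightarrow> complex^'k) \<in> l2" "g \<in> l2" "h \<in> l2"
  shows "l2inner f (\<lambda>j. g j - h j) = l2inner f g - l2inner f h"
  unfolding l2inner_def cinner_diff_right
  by (rule suminf_diff[symmetric]; rule summable_norm_cancel; rule l2inner_summable; fact)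

lemma l2inner_self:
  assumes "(f :: nat \<Rightarrow> complex^'k) \<in> l2"
  shows "l2inner f f = of_real (\<Sum>j. (norm (f j))^2)"
  unfolding l2inner_def cinner_self using assms
  by (intro suminf_of_real[symmetric]) (simp add: l2_def)

lemma l2inner_self_zero:
  assumes "(f :: nat \<Rightarrow> complex^'k) \<in> l2" "l2inner f f = 0"
  shows "f = (\<lambda>j. 0)"
proof -
  have "(\<Sum>j. (norm (f j))^2) = 0" using l2inner_self[OF assms(1)] assms(2) by simp
  hence "\<forall>j. (norm (f j))^2 = 0" using assms(1)
    by (subst (asm) suminf_eq_zero_iff) (auto simp: l2_def)
  thus ?thesis by auto
qed

lemma l2inner_bound:
  assumes "(f :: nat \<Rightarrow> complex^'k) \<in> l2" "g \<in> l2"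
  shows "norm (l2inner f g) \<le> ((\<Sum>j. (norm (f j))^2) + (\<Sum>j. (norm (g j))^2)) / 2"
proof -
  have s: "summable (\<lambda>j. (norm (f j))^2)" "summable (\<lambda>j. (norm (g j))^2)"
    using assms by (auto simp: l2_def)
  have "norm (l2inner f g) \<le> (\<Sum>j. norm (cinner (f j) (g j)))"
    unfolding l2inner_def by (intro summable_norm l2inner_summable assms)
  also have "\<dots> \<le> (\<Sum>j. ((norm (f j))^2 + (norm (g j))^2) / 2)"
    using s by (intro suminf_le cinner_norm2 l2inner_summable assms summable_divide summable_add) auto
  also have "\<dots> = (\<Sum>j. (norm (f j))^2 + (norm (g j))^2) / 2"
    by (rule suminf_divide) (intro summable_add s)
  also have "\<dots> = ((\<Sum>j. (norm (f j))^2) + (\<Sum>j. (norm (g j))^2)) / 2"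
    using suminf_add[OF s] by simp
  finally show ?thesis .
qed

lemma wcs_finite:
  fixes w y :: "'a \<Rightarrow> real"
  assumes "\<And>i. i \<in> I \<Longrightarrow> w i \<ge> 0"
  shows "(\<Sum>i\<in>I. w i * y i)^2 \<le> (\<Sum>i\<in>I. w i) * (\<Sum>i\<in>I. w i * (y i)^2)"
proof -
  have "(\<Sum>i\<in>I. sqrt (w i) * (sqrt (w i) * y i))^2
        \<le> (\<Sum>i\<in>I. (sqrt (w i))^2) * (\<Sum>i\<in>I. (sqrt (w i) * y i)^2)"
    by (rule Cauchy_Schwarz_ineq_sum)
  moreover have "(\<Sum>i\<in>I. sqrt (w i) * (sqrt (w i) * y i)) = (\<Sum>i\<in>I. w i * y i)"
    using assms by (intro sum.cong refl) (simp add: mult.assoc[symmetric])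
  moreover have "(\<Sum>i\<in>I. (sqrt (w i))^2) = (\<Sum>i\<in>I. w i)"
    using assms by (intro sum.cong refl) simp
  moreover have "(\<Sum>i\<in>I. (sqrt (w i) * y i)^2) = (\<Sum>i\<in>I. w i * (y i)^2)"
    using assms by (intro sum.cong refl) (simp add: power_mult_distrib)
  ultimately show ?thesis by simp
qed

lemma wcs_inf:
  fixes w y :: "nat \<Rightarrow> real"
  assumes w0: "\<And>i. w i \<ge> 0" and sw: "summable w"
    and s1: "summable (\<lambda>i. w i * y i)" and s2: "summable (\<lambda>i. w i * (y i)^2)"
  shows "(\<Sum>i. w i * y i)^2 \<le> (\<Sum>i. w i) * (\<Sum>i. w i * (y i)^2)"
proof (rule LIMSEQ_le_const2)
  show "(\<lambda>N. (\<Sum>i<N. w i * y i)^2) \<longlonglongrightarrow> (\<Sum>i. w i * y i)^2"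
    by (intro tendsto_power summable_LIMSEQ s1)
  show "\<exists>N. \<forall>n\<ge>N. (\<Sum>i<n. w i * y i)^2 \<le> (\<Sum>i. w i) * (\<Sum>i. w i * (y i)^2)"
  proof (intro exI allI impI)
    fix n :: nat
    have "(\<Sum>i<n. w i * y i)^2 \<le> (\<Sum>i<n. w i) * (\<Sum>i<n. w i * (y i)^2)"
      using w0 by (intro wcs_finite) auto
    also have "\<dots> \<le> (\<Sum>i. w i) * (\<Sum>i. w i * (y i)^2)"
      using w0 by (intro mult_mono sum_le_suminf sw s2 sum_nonneg suminf_nonneg) (auto intro: mult_nonneg_nonneg)
    finally show "(\<Sum>i<n. w i * y i)^2 \<le> (\<Sum>i. w i) * (\<Sum>i. w i * (y i)^2)" .
  qed
qed

lemma sum_shift_le_suminf: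
  fixes h :: "nat \<Rightarrow> real"
  assumes "summable h" "\<And>n. h n \<ge> 0" and that: "finite J"
  shows "(\<Sum>j\<in>J. h (j + k)) \<le> suminf h"
proof -
  have "(\<Sum>j\<in>J. h (j + k)) = sum h ((\<lambda>j. j + k) ` J)"
    by (subst sum.reindex) (auto simp: inj_on_def)
  also have "\<dots> \<le> suminf h" using that assms by (intro sum_le_suminf) auto
  finally show ?thesis .
qed

lemma sum_rev_atMost: "(\<Sum>j\<le>(i::nat). g (i - j)) = (\<Sum>j\<le>i. g j)"
  by (rule sum.reindex_bij_witness[where i="\<lambda>j. i - j" and j="\<lambda>j. i - j"]) auto

definition tadj :: "(nat \<Rightarrow> complex^'m^'r) \<Rightarrow> (nat \<Rightarrow> complex^'r) \<Rightarrow> (nat \<Rightarrow> complex^'m)" where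
  "tadj \<Omega> g = (\<lambda>j. \<Sum>k. mat_adj (\<Omega> k) *v g (k + j))"

locale toep =
  fixes \<Omega> :: "nat \<Rightarrow> complex^'m^'r"
  assumes sumO: "summable (\<lambda>k. mnorm (\<Omega> k))"
begin

definition "Sa = (\<Sum>k. mnorm (\<Omega> k))"

lemma Sa0: "Sa \<ge> 0" unfolding Sa_def by (intro suminf_nonneg sumO mnorm_nonneg)

lemma T1:
  assumes f: "(f :: nat \<Rightarrow> complex^'m) \<in> l2"
  shows "toeplitz \<Omega> f \<in> l2"
proof -
  define a where "a = (\<lambda>k. mnorm (\<Omega> k))"
  define b where "b = (\<lambda>j. norm (f j))"
  have a0: "a k \<ge> 0" for k by (simp add: a_def mnorm_nonneg)
  have b0: "b j \<ge> 0" for j by (simp add: b_def)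
  have sa: "summable a" using sumO by (simp add: a_def)
  have sb: "summable (\<lambda>j. (b j)^2)" using f by (simp add: l2_def b_def)
  define E where "E i = (\<Sum>j\<le>i. (b j)^2 * a (i - j))" for i
  have sE: "summable E"
    unfolding E_def using sa sb a0 b0 by (intro summable_Cauchy_product) auto
  have bound: "(norm (toeplitz \<Omega> f i))^2 \<le> Sa * E i" for i
  proof -
    have "norm (toeplitz \<Omega> f i) \<le> (\<Sum>j\<le>i. norm (\<Omega> (i - j) *v f j))"
      unfolding toeplitz_def by (rule norm_sum)
    also have "\<dots> \<le> (\<Sum>j\<le>i. a (i - j) * b j)"
      by (intro sum_mono) (simp add: a_def b_def norm_mv)
    finally have n1: "norm (toeplitz \<Omega> f i) \<le> (\<Sum>j\<le>i. a (i - j) * b j)" .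
    have "(norm (toeplitz \<Omega> f i))^2 \<le> (\<Sum>j\<le>i. a (i - j) * b j)^2"
      using n1 by (intro power_mono) auto
    also have "\<dots> \<le> (\<Sum>j\<le>i. a (i - j)) * (\<Sum>j\<le>i. a (i - j) * (b j)^2)"
      using a0 by (intro wcs_finite) auto
    also have "\<dots> \<le> Sa * E i"
    proof (rule mult_mono)
      show "(\<Sum>j\<le>i. a (i - j)) \<le> Sa"
        unfolding sum_rev_atMost[of a i] Sa_def a_def[symmetric]
        using sa a0 by (intro sum_le_suminf) (auto simp: a_def)
      show "(\<Sum>j\<le>i. a (i - j) * (b j)^2) \<le> E i" unfolding E_def by (simp add: mult.commute)
      show "0 \<le> Sa" by (rule Sa0)
      show "0 \<le> (\<Sum>j\<le>i. a (i - j) * (b j)^2)" using a0 by (intro sum_nonneg) auto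
    qed
    finally show ?thesis .
  qed
  have "summable (\<lambda>i. (norm (toeplitz \<Omega> f i))^2)"
    by (rule summable_comparison_test[OF _ summable_mult[OF sE, of Sa]]) (use bound in auto)
  thus ?thesis by (simp add: l2_def)
qed

lemma S0:
  assumes g: "(g :: nat \<Rightarrow> complex^'r) \<in> l2"
  shows "summable (\<lambda>k. norm (mat_adj (\<Omega> k) *v g (k + j)))"
proof -
  obtain B where B: "\<And>n. norm (g n) \<le> B" "B \<ge> 0" using l2_bounded[OF g] by blast
  show ?thesis
  proof (rule summable_comparison_test[OF _ summable_mult2[OF sumO, of B]])
    show "\<exists>N. \<forall>n\<ge>N. norm (norm (mat_adj (\<Omega> n) *v g (n + j))) \<le> mnorm (\<Omega> n) * B"
    proof (intro exI allI impI)
      fix n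
      have "norm (mat_adj (\<Omega> n) *v g (n + j)) \<le> mnorm (mat_adj (\<Omega> n)) * norm (g (n + j))"
        by (rule norm_mv)
      also have "\<dots> \<le> mnorm (\<Omega> n) * B" unfolding mnorm_adj
        by (intro mult_left_mono B mnorm_nonneg)
      finally show "norm (norm (mat_adj (\<Omega> n) *v g (n + j))) \<le> mnorm (\<Omega> n) * B" by simp
    qed
  qed
qed

lemma S1:
  assumes g: "(g :: nat \<Rightarrow> complex^'r) \<in> l2"
  shows "tadj \<Omega> g \<in> l2"
proof -
  define a where "a = (\<lambda>k. mnorm (\<Omega> k))"
  define \<beta> where "\<beta> = (\<lambda>j. norm (g j))"
  have a0: "a k \<ge> 0" for k by (simp add: a_def mnorm_nonneg)
  have sa: "summable a" using sumO by (simp add: a_def)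
  have sb: "summable (\<lambda>j. (\<beta> j)^2)" using g by (simp add: l2_def \<beta>_def)
  obtain B where B: "\<And>n. \<beta> n \<le> B" "B \<ge> 0" using l2_bounded[OF g] \<beta>_def by blast
  have b0: "\<beta> n \<ge> 0" for n by (simp add: \<beta>_def)
  define G where "G = (\<Sum>j. (\<beta> j)^2)"
  have s1: "summable (\<lambda>k. a k * \<beta> (k + j))" for j
    by (rule summable_comparison_test[OF _ summable_mult2[OF sa, of B]])
       (use a0 b0 B in \<open>auto intro!: mult_left_mono\<close>)
  have s2: "summable (\<lambda>k. a k * (\<beta> (k + j))^2)" for j
  proof (rule summable_comparison_test[OF _ summable_mult2[OF sa, of "B^2"]])
    show "\<exists>N. \<forall>n\<ge>N. norm (a n * (\<beta> (n + j))^2) \<le> a n * B^2"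
      using a0 b0 B by (auto intro!: mult_left_mono power_mono)
  qed
  define Q where "Q j = (\<Sum>k. a k * (\<beta> (k + j))^2)" for j
  have Q0: "Q j \<ge> 0" for j unfolding Q_def using s2 a0 by (intro suminf_nonneg) auto
  have bound: "(norm (tadj \<Omega> g j))^2 \<le> Sa * Q j" for j
  proof -
    have "norm (tadj \<Omega> g j) \<le> (\<Sum>k. norm (mat_adj (\<Omega> k) *v g (k + j)))"
      unfolding tadj_def using S0[OF g] by (rule summable_norm)
    also have "\<dots> \<le> (\<Sum>k. a k * \<beta> (k + j))"
    proof (rule suminf_le)
      show "norm (mat_adj (\<Omega> k) *v g (k + j)) \<le> a k * \<beta> (k + j)" for k
        using norm_mv[of "mat_adj (\<Omega> k)" "g (k + j)"] by (simp add: mnorm_adj a_def \<beta>_def)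
    qed (use S0[OF g] s1 in auto)
    finally have n1: "norm (tadj \<Omega> g j) \<le> (\<Sum>k. a k * \<beta> (k + j))" .
    hence "(norm (tadj \<Omega> g j))^2 \<le> (\<Sum>k. a k * \<beta> (k + j))^2" by (intro power_mono) auto
    also have "\<dots> \<le> (\<Sum>k. a k) * Q j"
      unfolding Q_def by (rule wcs_inf[OF a0 sa s1 s2])
    finally show ?thesis by (simp add: Sa_def a_def)
  qed
  have sQ: "summable Q"
  proof (rule summableI_nonneg_bounded[OF Q0])
    fix N
    have "(\<Sum>j<N. Q j) = (\<Sum>k. \<Sum>j<N. a k * (\<beta> (k + j))^2)"
      unfolding Q_def by (rule suminf_sum[symmetric]) (rule s2)
    also have "\<dots> \<le> (\<Sum>k. a k * G)"
    proof (rule suminf_le)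
      show "(\<Sum>j<N. a k * (\<beta> (k + j))^2) \<le> a k * G" for k
      proof -
        have "(\<Sum>j<N. (\<beta> (j + k))^2) \<le> G" unfolding G_def
          by (rule sum_shift_le_suminf[OF sb]) auto
        thus ?thesis using a0[of k] by (simp add: sum_distrib_left[symmetric] add.commute mult_left_mono)
      qed
      show "summable (\<lambda>k. \<Sum>j<N. a k * (\<beta> (k + j))^2)" by (intro summable_sum s2)
      show "summable (\<lambda>k. a k * G)" by (intro summable_mult2 sa)
    qed
    also have "\<dots> = Sa * G" using sa by (simp add: suminf_mult2 Sa_def a_def)
    finally show "(\<Sum>j<N. Q j) \<le> Sa * G" .
  qed
  have "summable (\<lambda>j. (norm (tadj \<Omega> g j))^2)"
    by (rule summable_comparison_test[OF _ summable_mult[OF sQ, of Sa]]) (use bound in auto)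
  thus ?thesis by (simp add: l2_def)
qed

lemma tadj_diff:
  assumes "(g1 :: nat \<Rightarrow> complex^'r) \<in> l2" "g2 \<in> l2"
  shows "tadj \<Omega> (\<lambda>j. g1 j - g2 j) = (\<lambda>j. tadj \<Omega> g1 j - tadj \<Omega> g2 j)"
proof
  fix j
  have "summable (\<lambda>k. mat_adj (\<Omega> k) *v g1 (k + j))" "summable (\<lambda>k. mat_adj (\<Omega> k) *v g2 (k + j))"
    using S0[OF assms(1)] S0[OF assms(2)] by (auto intro: summable_norm_cancel)
  thus "tadj \<Omega> (\<lambda>j. g1 j - g2 j) j = tadj \<Omega> g1 j - tadj \<Omega> g2 j"
    unfolding tadj_def by (simp add: matrix_vector_mult_diff_distrib suminf_diff)
qed

lemma tadj_shift: "tadj \<Omega> (\<lambda>j. g (Suc j)) j = tadj \<Omega> g (Suc j)"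
  unfolding tadj_def by simp

end

lemma infsum_suminf_nat:
  assumes "(f :: nat \<Rightarrow> complex) summable_on UNIV"
  shows "infsum f UNIV = suminf f"
  using has_sum_imp_sums[OF has_sum_infsum[OF assms]] by (simp add: sums_iff)

lemma infsum_suminf_nat':
  assumes "summable (\<lambda>n. norm (f n :: complex))"
  shows "infsum f UNIV = suminf f"
  using norm_summable_imp_has_sum[OF assms summable_sums[OF summable_norm_cancel[OF assms]]]
  by (simp add: infsumI)

lemma finite_nat_pairs_bounded:
  assumes "finite (F :: (nat \<times> nat) set)"
  obtains N where "F \<subseteq> {..N} \<times> {..N}"
proof -
  define N where "N = Max (fst ` F \<union> snd ` F)"
  have "F \<subseteq> {..N} \<times> {..N}"
  proof
    fix p assume "p \<in> F"
    hence "fst p \<le> N" "snd p \<le> N" using assms unfolding N_def by (auto intro: Max_ge)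
    thus "p \<in> {..N} \<times> {..N}" by (cases p) auto
  qed
  thus ?thesis by (rule that)
qed

context toep
begin

lemma A1:
  assumes f: "(f :: nat \<Rightarrow> complex^'m) \<in> l2" and g: "(g :: nat \<Rightarrow> complex^'r) \<in> l2"
  shows "l2inner (toeplitz \<Omega> f) g = l2inner f (tadj \<Omega> g)"
proof -
  define a where "a = (\<lambda>k. mnorm (\<Omega> k))"
  define b where "b = (\<lambda>j. norm (f j))"
  define \<beta> where "\<beta> = (\<lambda>j. norm (g j))"
  have a0: "a k \<ge> 0" for k by (simp add: a_def mnorm_nonneg)
  have b0: "b k \<ge> 0" for k by (simp add: b_def)
  have be0: "\<beta> k \<ge> 0" for k by (simp add: \<beta>_def)
  have sa: "summable a" using sumO by (simp add: a_def)
  have sb: "summable (\<lambda>j. (b j)^2)" using f by (simp add: l2_def b_def)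
  have sbe: "summable (\<lambda>j. (\<beta> j)^2)" using g by (simp add: l2_def \<beta>_def)
  obtain B where B: "\<And>n. \<beta> n \<le> B" "B \<ge> 0" using l2_bounded[OF g] \<beta>_def by blast
  define Bf where "Bf = (\<Sum>j. (b j)^2)"
  define Bg where "Bg = (\<Sum>j. (\<beta> j)^2)"
  define c where "c j k = cinner (\<Omega> k *v f j) (g (j + k))" for j k
  have cb: "norm (c j k) \<le> a k * (b j * \<beta> (j + k))" for j k
  proof -
    have "norm (c j k) \<le> norm (\<Omega> k *v f j) * norm (g (j + k))"
      unfolding c_def by (rule cinner_norm)
    also have "\<dots> \<le> (a k * b j) * \<beta> (j + k)"
      unfolding a_def b_def \<beta>_def by (intro mult_right_mono norm_mv norm_ge_zero)
    finally show ?thesis by (simp add: mult.assoc)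
  qed
  have inner_bound: "(\<Sum>j\<le>N. b j * \<beta> (j + k)) \<le> (Bf + Bg) / 2" for N k
  proof -
    have "(\<Sum>j\<le>N. b j * \<beta> (j + k)) \<le> (\<Sum>j\<le>N. ((b j)^2 + (\<beta> (j + k))^2) / 2)"
    proof (intro sum_mono)
      fix j
      have "2 * b j * \<beta> (j + k) \<le> (b j)^2 + (\<beta> (j + k))^2" by (rule sum_squares_bound)
      thus "b j * \<beta> (j + k) \<le> ((b j)^2 + (\<beta> (j + k))^2) / 2" by simp
    qed
    also have "\<dots> = ((\<Sum>j\<le>N. (b j)^2) + (\<Sum>j\<le>N. (\<beta> (j + k))^2)) / 2"
      by (simp only: sum.distrib sum_divide_distrib[symmetric])
    also have "\<dots> \<le> (Bf + Bg) / 2"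
    proof -
      have "(\<Sum>j\<le>N. (b j)^2) \<le> Bf" unfolding Bf_def by (intro sum_le_suminf sb) auto
      moreover have "(\<Sum>j\<le>N. (\<beta> (j + k))^2) \<le> Bg" unfolding Bg_def
        by (rule sum_shift_le_suminf[OF sbe]) auto
      ultimately show ?thesis by simp
    qed
    finally show ?thesis .
  qed
  have abs: "(\<lambda>p. norm ((\<lambda>(j,k). c j k) p)) summable_on UNIV"
    unfolding abs_summable_iff_bdd_above
  proof (rule bdd_aboveI2)
    fix F :: "(nat \<times> nat) set" assume "F \<in> {F. F \<subseteq> UNIV \<and> finite F}"
    hence fin: "finite F" by simp
    then obtain N where N: "F \<subseteq> {..N} \<times> {..N}" by (rule finite_nat_pairs_bounded)
    have "(\<Sum>p\<in>F. norm ((\<lambda>(j,k). c j k) p)) \<le> (\<Sum>p\<in>{..N} \<times> {..N}. norm ((\<lambda>(j,k). c j k) p))"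
      using N by (intro sum_mono2) auto
    also have "\<dots> = (\<Sum>j\<le>N. \<Sum>k\<le>N. norm (c j k))"
      by (simp add: sum.cartesian_product case_prod_beta)
    also have "\<dots> = (\<Sum>k\<le>N. \<Sum>j\<le>N. norm (c j k))" by (rule sum.swap)
    also have "\<dots> \<le> (\<Sum>k\<le>N. a k * ((Bf + Bg) / 2))"
    proof (rule sum_mono)
      fix k
      have "(\<Sum>j\<le>N. norm (c j k)) \<le> (\<Sum>j\<le>N. a k * (b j * \<beta> (j + k)))"
        by (intro sum_mono cb)
      also have "\<dots> = a k * (\<Sum>j\<le>N. b j * \<beta> (j + k))" by (simp add: sum_distrib_left)
      also have "\<dots> \<le> a k * ((Bf + Bg) / 2)" by (intro mult_left_mono inner_bound a0)
      finally show "(\<Sum>j\<le>N. norm (c j k)) \<le> a k * ((Bf + Bg) / 2)" .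
    qed
    also have "\<dots> = (\<Sum>k\<le>N. a k) * ((Bf + Bg) / 2)" by (simp add: sum_distrib_right)
    also have "\<dots> \<le> Sa * ((Bf + Bg) / 2)"
    proof (rule mult_right_mono)
      show "(\<Sum>k\<le>N. a k) \<le> Sa" unfolding Sa_def a_def[symmetric]
        using sa a0 by (intro sum_le_suminf) auto
      show "0 \<le> (Bf + Bg) / 2" unfolding Bf_def Bg_def
        using sb sbe by (intro divide_nonneg_pos add_nonneg_nonneg suminf_nonneg) auto
    qed
    finally show "(\<Sum>p\<in>F. norm ((\<lambda>(j,k). c j k) p)) \<le> Sa * ((Bf + Bg) / 2)" .
  qed
  have summ: "(\<lambda>(j,k). c j k) summable_on (Sigma UNIV (\<lambda>_. UNIV))"
    using abs_summable_summable[OF abs] by simp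
  (* right hand side *)
  have rowsum: "summable (\<lambda>k. norm (c j k))" for j
  proof (rule summable_comparison_test[OF _ summable_mult2[OF sa, of "b j * B"]])
    show "\<exists>N. \<forall>n\<ge>N. norm (norm (c j n)) \<le> a n * (b j * B)"
      using cb a0 b0 B by (auto intro!: order_trans[OF cb] mult_left_mono)
  qed
  have row: "infsum (c j) UNIV = cinner (f j) (tadj \<Omega> g j)" for j
  proof -
    have sv: "summable (\<lambda>k. mat_adj (\<Omega> k) *v g (k + j))"
      using S0[OF g] by (rule summable_norm_cancel)
    have "cinner (f j) (tadj \<Omega> g j) = (\<Sum>k. cinner (f j) (mat_adj (\<Omega> k) *v g (k + j)))"
      unfolding tadj_def by (rule cinner_suminf_right[OF sv])
    also have "\<dots> = (\<Sum>k. c j k)"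
      by (simp add: c_def cinner_adj add.commute)
    also have "\<dots> = infsum (c j) UNIV" by (rule infsum_suminf_nat'[OF rowsum, symmetric])
    finally show ?thesis by simp
  qed
  have R: "l2inner f (tadj \<Omega> g) = infsum (\<lambda>(j,k). c j k) UNIV"
  proof -
    have "infsum (\<lambda>j. infsum (c j) UNIV) UNIV = infsum (\<lambda>(j,k). c j k) (Sigma UNIV (\<lambda>_. UNIV))"
      by (rule infsum_Sigma'_banach[OF summ])
    moreover have "(\<lambda>j. infsum (c j) UNIV) summable_on UNIV"
      by (rule summable_on_Sigma_banach[OF summ])
    ultimately show ?thesis unfolding l2inner_def using row
      by (simp add: infsum_suminf_nat)
  qed
  (* left hand side *)
  define D where "D = Sigma (UNIV::nat set) (\<lambda>i. {..i})"
  define h where "h = (\<lambda>(j::nat, k::nat). (j + k, j))"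
  have bij: "bij_betw h UNIV D"
    by (rule bij_betw_byWitness[where f'="\<lambda>(i,j). (j, i - j)"]) (auto simp: h_def D_def)
  define F where "F = (\<lambda>(i, j). c j (i - j))"
  have Fh: "(\<lambda>p. F (h p)) = (\<lambda>(j,k). c j k)" by (auto simp: F_def h_def)
  have sF: "F summable_on D"
    using summable_on_reindex_bij_betw[OF bij, of F] summ unfolding Fh by simp
  have iF: "infsum F D = infsum (\<lambda>(j,k). c j k) UNIV"
    using infsum_reindex_bij_betw[OF bij, of F] unfolding Fh by simp
  have sF': "(\<lambda>(i,j). c j (i - j)) summable_on Sigma UNIV (\<lambda>i. {..i})"
    using sF by (simp add: F_def D_def)
  have diag: "(\<Sum>j\<le>i. c j (i - j)) = cinner (toeplitz \<Omega> f i) (g i)" for i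
    unfolding toeplitz_def cinner_sum_left c_def by (intro sum.cong refl) auto
  have L: "l2inner (toeplitz \<Omega> f) g = infsum F D"
  proof -
    have "infsum (\<lambda>i. infsum (\<lambda>j. c j (i - j)) {..i}) UNIV = infsum (\<lambda>(i,j). c j (i - j)) (Sigma UNIV (\<lambda>i. {..i}))"
      by (rule infsum_Sigma'_banach[OF sF'])
    moreover have "(\<lambda>i. infsum (\<lambda>j. c j (i - j)) {..i}) summable_on UNIV"
      by (rule summable_on_Sigma_banach[OF sF'])
    ultimately show ?thesis unfolding l2inner_def F_def D_def
      using diag by (simp add: infsum_suminf_nat)
  qed
  show ?thesis using L R iF by simp
qed

end

context toep
begin

lemma adj_eq:
  assumes g: "(g :: nat \<Rightarrow> complex^'r) \<in> l2"
  shows "l2_adjoint (toeplitz \<Omega>) g = tadj \<Omega> g"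
  unfolding l2_adjoint_def
proof (rule the_equality)
  show "tadj \<Omega> g \<in> l2 \<and> (\<forall>f\<in>l2. l2inner (toeplitz \<Omega> f) g = l2inner f (tadj \<Omega> g))"
    using S1[OF g] A1[OF _ g] by blast
next
  fix h assume h: "h \<in> l2 \<and> (\<forall>f\<in>l2. l2inner (toeplitz \<Omega> f) g = l2inner f h)"
  define e where "e = (\<lambda>j. h j - tadj \<Omega> g j)"
  have e: "e \<in> l2" unfolding e_def using h S1[OF g] by (intro l2_diff) auto
  have "l2inner e h = l2inner e (tadj \<Omega> g)" using h A1[OF e g] e by auto
  hence "l2inner e e = 0" unfolding e_def using h S1[OF g] e[unfolded e_def]
    by (subst l2inner_diff_right) auto
  hence "e = (\<lambda>j. 0)" by (rule l2inner_self_zero[OF e])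
  thus "h = tadj \<Omega> g" by (auto simp: e_def fun_eq_iff)
qed

lemma tadj_zero:
  assumes dense: "dense_range_l2 (toeplitz \<Omega>)" and g: "(g :: nat \<Rightarrow> complex^'r) \<in> l2"
    and z: "tadj \<Omega> g = (\<lambda>j. 0)"
  shows "g = (\<lambda>j. 0)"
proof -
  define G where "G = (\<Sum>j. (norm (g j))^2)"
  have G0: "G \<ge> 0" unfolding G_def using g by (intro suminf_nonneg) (auto simp: l2_def)
  have "\<not> G > 0"
  proof
    assume Gp: "G > 0"
    obtain u where u: "u \<in> l2" and ul: "l2norm (\<lambda>j. toeplitz \<Omega> u j - g j) < sqrt G"
      using dense g Gp unfolding dense_range_l2_def by (meson real_sqrt_gt_zero)
    define x where "x = (\<lambda>j. toeplitz \<Omega> u j - g j)"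
    have Tu: "toeplitz \<Omega> u \<in> l2" by (rule T1[OF u])
    have x: "x \<in> l2" unfolding x_def using Tu g by (rule l2_diff)
    define X where "X = (\<Sum>j. (norm (x j))^2)"
    have X0: "X \<ge> 0" unfolding X_def using x by (intro suminf_nonneg) (auto simp: l2_def)
    have "sqrt X < sqrt G" using ul by (simp add: l2norm_def X_def x_def)
    hence XG: "X < G" by simp
    have "l2inner (toeplitz \<Omega> u) g = l2inner u (tadj \<Omega> g)" by (rule A1[OF u g])
    also have "\<dots> = 0" by (simp add: z l2inner_def)
    finally have Tg: "l2inner (toeplitz \<Omega> u) g = 0" .
    have "l2inner x g = l2inner (toeplitz \<Omega> u) g - l2inner g g"
      unfolding x_def by (rule l2inner_diff_left[OF Tu g g])
    hence "l2inner x g = - of_real G" using l2inner_self[OF g] Tg by (simp add: G_def)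
    hence "G = norm (l2inner x g)" using G0 by simp
    also have "\<dots> \<le> (X + G) / 2" unfolding X_def G_def by (rule l2inner_bound[OF x g])
    finally show False using XG by simp
  qed
  hence "G = 0" using G0 by simp
  hence "l2inner g g = 0" using l2inner_self[OF g] by (simp add: G_def)
  thus ?thesis by (rule l2inner_self_zero[OF g])
qed

lemma tadj_inj:
  assumes dense: "dense_range_l2 (toeplitz \<Omega>)" and g: "(g1 :: nat \<Rightarrow> complex^'r) \<in> l2" "g2 \<in> l2"
    and e: "tadj \<Omega> g1 = tadj \<Omega> g2"
  shows "g1 = g2"
proof -
  have "tadj \<Omega> (\<lambda>j. g1 j - g2 j) = (\<lambda>j. 0)" using tadj_diff[OF g] e by simp
  hence "(\<lambda>j. g1 j - g2 j) = (\<lambda>j. 0)" using tadj_zero[OF dense l2_diff[OF g]] by blast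
  thus ?thesis by (auto simp: fun_eq_iff)
qed

end

lemma toep_taylor:
  assumes "RH_inf \<Phi>"
  shows "toep (taylor_coeff \<Phi>)"
proof
  show "summable (\<lambda>k. mnorm (taylor_coeff \<Phi> k))"
    unfolding mnorm_def by (intro summable_sum RH_inf_taylor_summable assms)
qed

lemma obs_l2:
  assumes "stable A"
  shows "obs (D :: complex^'n^'r) (\<lambda>v. A *v v) x \<in> l2"
proof -
  have s: "summable (\<lambda>j. (mnorm D)^2 * (norm (((\<lambda>v. A *v v) ^^ j) x))^2)"
    by (intro summable_mult stable_l2 assms)
  have bnd: "norm ((norm (obs D (\<lambda>v. A *v v) x j))^2) \<le> (mnorm D)^2 * (norm (((\<lambda>v. A *v v) ^^ j) x))^2" for j
  proof -
    have "norm (obs D (\<lambda>v. A *v v) x j) \<le> mnorm D * norm (((\<lambda>v. A *v v) ^^ j) x)"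
      unfolding obs_def by (rule norm_mv)
    hence "(norm (obs D (\<lambda>v. A *v v) x j))^2 \<le> (mnorm D * norm (((\<lambda>v. A *v v) ^^ j) x))^2"
      by (intro power_mono) auto
    thus ?thesis by (simp add: power_mult_distrib)
  qed
  have "summable (\<lambda>j. (norm (obs D (\<lambda>v. A *v v) x j))^2)"
    by (rule summable_comparison_test[OF _ s]) (use bnd in blast)
  thus ?thesis by (simp add: l2_def)
qed

lemma funpow_mv_diff: "((\<lambda>v. A *v v) ^^ j) (x - y) = ((\<lambda>v. A *v v) ^^ j) x - ((\<lambda>v. (A::complex^'n^'n) *v v) ^^ j) y"
  by (induction j) (simp_all add: matrix_vector_mult_diff_distrib)

lemma obs_diff: "obs C (\<lambda>v. A *v v) (x - y) = (\<lambda>j. obs C (\<lambda>v. A *v v) x j - obs (C::complex^'n^'m) (\<lambda>v. (A::complex^'n^'n) *v v) y j)"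
  unfolding obs_def by (simp add: funpow_mv_diff matrix_vector_mult_diff_distrib)

lemma obs_shift: "obs C (\<lambda>v. A *v v) (A *v x) = (\<lambda>j. obs (C::complex^'n^'m) (\<lambda>v. (A::complex^'n^'n) *v v) x (Suc j))"
  unfolding obs_def by (simp add: funpow_Suc_right del: funpow.simps)

lemma cinner_zero_left[simp]: "cinner 0 (y::complex^'k) = 0"
  unfolding cinner_def by simp

lemma orth_proj_id:
  assumes "v \<in> X" and diffX: "\<And>a b. a \<in> X \<Longrightarrow> b \<in> X \<Longrightarrow> a - b \<in> X"
  shows "orth_proj X (v::complex^'n) = v"
  unfolding orth_proj_def
proof (rule the_equality)
  show "v \<in> X \<and> (\<forall>z\<in>X. cinner (v - v) z = 0)" using assms by simp
next
  fix y assume y: "y \<in> X \<and> (\<forall>z\<in>X. cinner (v - y) z = 0)"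
  hence "cinner (v - y) (v - y) = 0" using diffX assms(1) by blast
  hence "norm (v - y) = 0" by (simp add: cinner_self)
  thus "y = v" by simp
qed

theorem lemma2p3:
  fixes A :: "complex^'n^'n" and C :: "complex^'n^'m" and \<Gamma> :: "complex^'m^'n"
    and R0 :: "complex^'m^'m"
    and \<Phi> :: "complex \<Rightarrow> complex^'m^'r" and C\<Phi> :: "complex^'n^'r"
  defines "R \<equiv> Rfun C A \<Gamma> R0"
    and "T\<Phi>adj \<equiv> l2_adjoint (toeplitz (taylor_coeff \<Phi>))"
    and "Wobs \<equiv> obs C (\<lambda>x. A *v x)"
    and "W\<Phi>obs \<equiv> obs C\<Phi> (\<lambda>x. A *v x)"
  defines "X\<Phi> \<equiv> {x. Wobs x \<in> T\<Phi>adj ` l2}"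
  defines "M\<Phi> \<equiv> {f \<in> l2. T\<Phi>adj f \<in> range Wobs}"
  assumes stab: "stable A"
    and nonzero: "\<exists>z. Rdom A z \<and> R z \<noteq> 0"
    and nonneg: "\<forall>\<zeta>. cmod \<zeta> = 1 \<longrightarrow> psd (R \<zeta>)"
    and outer: "outer_spectral_factor R (Rdom A) \<Phi>"
    and real_C\<Phi>: "\<forall>z. cmod z \<le> 1 \<longrightarrow>
          \<Phi> z = \<Phi> 0 + msc z (C\<Phi> ** matrix_inv (mat 1 - msc z A) ** \<Gamma>)"
    and C\<Phi>_obs: "\<forall>x\<in>X\<Phi>. Wobs x = T\<Phi>adj (W\<Phi>obs x)"
  shows "M\<Phi> = W\<Phi>obs ` X\<Phi> \<and>
         (inj Wobs \<longrightarrow> M\<Phi> = obs C\<Phi> (\<lambda>y. orth_proj X\<Phi> (A *v y)) ` X\<Phi>)"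
proof -
  let ?\<Omega> = "taylor_coeff \<Phi>"
  let ?F = "\<lambda>x. A *v x"
  have RH: "RH_inf \<Phi>" and dense: "dense_range_l2 (toeplitz ?\<Omega>)"
    using outer unfolding outer_spectral_factor_def by auto
  interpret toep ?\<Omega> by (rule toep_taylor[OF RH])
  have adj: "T\<Phi>adj g = tadj ?\<Omega> g" if "g \<in> l2" for g
    unfolding T\<Phi>adj_def by (rule adj_eq[OF that])
  have WPl2: "W\<Phi>obs x \<in> l2" for x unfolding W\<Phi>obs_def by (rule obs_l2[OF stab])
  have part1: "M\<Phi> = W\<Phi>obs ` X\<Phi>"
  proof
    show "M\<Phi> \<subseteq> W\<Phi>obs ` X\<Phi>"
    proof
      fix f assume "f \<in> M\<Phi>"
      then obtain x where f: "f \<in> l2" and fx: "T\<Phi>adj f = Wobs x" unfolding M\<Phi>_def by auto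
      have xX: "x \<in> X\<Phi>" unfolding X\<Phi>_def using f fx by force
      have "tadj ?\<Omega> f = tadj ?\<Omega> (W\<Phi>obs x)"
        using fx C\<Phi>_obs xX adj[OF f] adj[OF WPl2[of x]] by simp
      hence "f = W\<Phi>obs x" by (rule tadj_inj[OF dense f WPl2])
      thus "f \<in> W\<Phi>obs ` X\<Phi>" using xX by blast
    qed
  next
    show "W\<Phi>obs ` X\<Phi> \<subseteq> M\<Phi>"
    proof
      fix f assume "f \<in> W\<Phi>obs ` X\<Phi>"
      then obtain x where x: "x \<in> X\<Phi>" and fx: "f = W\<Phi>obs x" by blast
      have "T\<Phi>adj f = Wobs x" using C\<Phi>_obs x fx by simp
      thus "f \<in> M\<Phi>" unfolding M\<Phi>_def using WPl2[of x] fx by auto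
    qed
  qed
  have Xdiff: "a - b \<in> X\<Phi>" if ha: "a \<in> X\<Phi>" and hb: "b \<in> X\<Phi>" for a b
  proof -
    obtain g1 where g1: "g1 \<in> l2" "Wobs a = T\<Phi>adj g1" using ha unfolding X\<Phi>_def image_iff mem_Collect_eq by metis
    obtain g2 where g2: "g2 \<in> l2" "Wobs b = T\<Phi>adj g2" using hb unfolding X\<Phi>_def image_iff mem_Collect_eq by metis
    have "Wobs (a - b) = (\<lambda>j. Wobs a j - Wobs b j)" unfolding Wobs_def by (rule obs_diff)
    also have "\<dots> = tadj ?\<Omega> (\<lambda>j. g1 j - g2 j)"
      using g1 g2 adj tadj_diff[OF g1(1) g2(1)] by simp
    also have "\<dots> = T\<Phi>adj (\<lambda>j. g1 j - g2 j)" using adj[OF l2_diff[OF g1(1) g2(1)]] by simp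
    finally show ?thesis unfolding X\<Phi>_def using l2_diff[OF g1(1) g2(1)] by auto
  qed
  have Xinv: "A *v y \<in> X\<Phi>" if hy: "y \<in> X\<Phi>" for y
  proof -
    obtain g where g: "g \<in> l2" "Wobs y = T\<Phi>adj g" using hy unfolding X\<Phi>_def image_iff mem_Collect_eq by metis
    have gs: "(\<lambda>j. g (Suc j)) \<in> l2" using l2_shift[OF g(1), of 1] by simp
    have "Wobs (A *v y) = (\<lambda>j. Wobs y (Suc j))" unfolding Wobs_def by (rule obs_shift)
    also have "\<dots> = (\<lambda>j. tadj ?\<Omega> g (Suc j))" using g adj by simp
    also have "\<dots> = tadj ?\<Omega> (\<lambda>j. g (Suc j))" by (rule ext) (rule tadj_shift[symmetric])
    also have "\<dots> = T\<Phi>adj (\<lambda>j. g (Suc j))" using adj[OF gs] by simp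
    finally show ?thesis unfolding X\<Phi>_def using gs by auto
  qed
  let ?P = "\<lambda>y. orth_proj X\<Phi> (A *v y)"
  have Pit: "(?P ^^ j) x = (?F ^^ j) x \<and> (?F ^^ j) x \<in> X\<Phi>" if "x \<in> X\<Phi>" for x j
  proof (induction j)
    case 0 then show ?case using that by simp
  next
    case (Suc j)
    have inX: "A *v (?F ^^ j) x \<in> X\<Phi>" using Suc Xinv by blast
    have "(?P ^^ Suc j) x = orth_proj X\<Phi> (A *v (?F ^^ j) x)" using Suc by simp
    also have "\<dots> = A *v (?F ^^ j) x" by (rule orth_proj_id[OF inX Xdiff])
    finally show ?case using inX by simp
  qed
  have "obs C\<Phi> ?P x = W\<Phi>obs x" if "x \<in> X\<Phi>" for x
    unfolding W\<Phi>obs_def obs_def using Pit[OF that] by simp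
  hence "obs C\<Phi> ?P ` X\<Phi> = W\<Phi>obs ` X\<Phi>" by (rule image_cong[OF refl])
  thus ?thesis using part1 by simp
qed

end
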